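(* Let $\mathcal A$ be a finite union-closed family with $n=|\mathcal A|$ member-sets whose universe $U(\mathcal A)=\bigcup_{A\in\mathcal A}A$ has size $m$, and suppose $2^{m-1}<n\leq 2^m$. Then some element of $U(\mathcal A)$ is contained in at least $\tfrac{6}{13}|\mathcal A|$ member-sets of $\mathcal A$.
   Context: A family $\mathcal A$ of sets is union-closed if $A\cup B\in\mathcal A$ for all $A,B\in\mathcal A$. A family with $n$ member-sets on a universe of size $m$ satisfying $2^{m-1}<n\leq 2^m$ is called compact. *)

theory Defs
  imports Complex_Main
begin

definition union_closed :: "'a set set \<Rightarrow> bool" where
  "union_closed F \<longleftrightarrow> (\<forall>A\<in>F. \<forall>B\<in>F. A \<union> B \<in> F)"

end

theory Submission
  imports Defs
begin

lemma m12: "1 \<le> m \<Longrightarrow> m \<le> 12 \<Longrightarrow> m = (1::nat) \<or> m = 2 \<or> m = 3 \<or> m = 4 \<or> m = 5 \<or> m = 6 \<or> m = 7 \<or> m = 8 \<or> m = 9 \<or> m = 10 \<or> m = 11 \<or> m = 12"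
  by presburger
lemma arith13:
  fixes m n :: nat
  assumes "m \<ge> 1" "2^(m-1) < n"
  shows "13*2^m + 12*m*n \<le> 13*(m*n + n + (m choose 2) + (m choose 3))"
proof (cases "m \<ge> 13")
  case True
  have "(2::nat)^m = 2*2^(m-1)" using assms(1) by (metis Suc_diff_1 less_le_trans zero_less_one power_Suc)
  hence "2^m \<le> 2*n" using assms(2) by linarith
  hence "13*2^m \<le> m*n + 13*n" using True mult_le_mono1[of 13 m n]
    by linarith
  thus ?thesis by simp
next
  case False
  hence "m \<le> 12" by simp
  hence "m = (1::nat) \<or> m = 2 \<or> m = 3 \<or> m = 4 \<or> m = 5 \<or> m = 6 \<or> m = 7 \<or> m = 8 \<or> m = 9 \<or> m = 10 \<or> m = 11 \<or> m = 12"
    using m12 assms(1) by blast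
  then show ?thesis using assms(2)
    by (elim disjE) (simp_all add: binomial_code fold_atLeastAtMost_nat.simps fact_numeral)
qed

lemma pair_lemma:
  assumes fin: "finite F" and uc: "union_closed F" and S: "{x,y} \<in> F"
  shows "card F \<le> card {A\<in>F. x \<in> A} + card {A\<in>F. y \<in> A}"
proof -
  define Fx where "Fx = {A\<in>F. x \<in> A}"
  define Fy where "Fy = {A\<in>F. y \<in> A}"
  define F0 where "F0 = {A\<in>F. x \<notin> A \<and> y \<notin> A}"
  have fx: "finite Fx" "finite Fy" "finite F0" using fin by (auto simp: Fx_def Fy_def F0_def)
  have split: "F = (Fx \<union> Fy) \<union> F0" by (auto simp: Fx_def Fy_def F0_def)
  have disj: "(Fx \<union> Fy) \<inter> F0 = {}" by (auto simp: Fx_def Fy_def F0_def)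
  have c1: "card F = card (Fx \<union> Fy) + card F0"
    using card_Un_disjoint[of "Fx \<union> Fy" F0] fx split disj by simp
  have c2: "card (Fx \<union> Fy) + card (Fx \<inter> Fy) = card Fx + card Fy"
    using card_Un_Int[OF fx(1) fx(2)] by simp
  have inj: "inj_on (\<lambda>A. A \<union> {x,y}) F0"
    unfolding inj_on_def F0_def by blast
  have img: "(\<lambda>A. A \<union> {x,y}) ` F0 \<subseteq> Fx \<inter> Fy"
    using uc S by (auto simp: union_closed_def F0_def Fx_def Fy_def)
  have "card F0 \<le> card (Fx \<inter> Fy)"
    using card_inj_on_le[OF inj img] fx by auto
  then show ?thesis using c1 c2 by (simp add: Fx_def Fy_def)
qed

theorem mainTheorem3:
  fixes F :: "'a set set"
  assumes "finite F"
    and "\<forall>A\<in>F. finite A"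
    and "union_closed F"
    and "card (\<Union>F) = m"
    and "m \<ge> 1"
    and "2 ^ (m - 1) < card F"
    and "card F \<le> 2 ^ m"
  shows "\<exists>x\<in>\<Union>F. real (card {A\<in>F. x \<in> A}) \<ge> 6 / 13 * real (card F)"
proof -
  define U where "U = \<Union>F"
  define n where "n = card F"
  have finU: "finite U" using assms(1,2) by (simp add: U_def)
  have mU: "card U = m" using assms(4) U_def by simp
  have FP: "\<And>A. A \<in> F \<Longrightarrow> A \<subseteq> U" by (auto simp: U_def)
  have uc: "\<And>A B. A\<in>F \<Longrightarrow> B\<in>F \<Longrightarrow> A \<union> B \<in> F"
    using assms(3) by (simp add: union_closed_def)
  show ?thesis
  proof (cases "\<exists>S\<in>F. card S = 1 \<or> card S = 2")
    case True
    then obtain S x y where S: "S \<in> F" "S = {x,y}"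
      by (metis card_1_singletonE card_2_iff insert_absorb2)
    have "card F \<le> card {A\<in>F. x \<in> A} + card {A\<in>F. y \<in> A}"
      using pair_lemma[OF assms(1,3)] S by simp
    then have "card F \<le> 2 * card {A\<in>F. x \<in> A} \<or> card F \<le> 2 * card {A\<in>F. y \<in> A}"
      by linarith
    then show ?thesis
    proof
      assume h: "card F \<le> 2 * card {A\<in>F. x \<in> A}"
      have xU: "x \<in> \<Union>F" using S by auto
      from h have "real (card F) \<le> 2 * real (card {A\<in>F. x \<in> A})"
        by (metis of_nat_le_iff of_nat_mult of_nat_numeral)
      then have "6 / 13 * real (card F) \<le> real (card {A\<in>F. x \<in> A})" by linarith
      with xU show ?thesis by blast
    next
      assume h: "card F \<le> 2 * card {A\<in>F. y \<in> A}"
      have xU: "y \<in> \<Union>F" using S by auto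
      from h have "real (card F) \<le> 2 * real (card {A\<in>F. y \<in> A})"
        by (metis of_nat_le_iff of_nat_mult of_nat_numeral)
      then have "6 / 13 * real (card F) \<le> real (card {A\<in>F. y \<in> A})" by linarith
      with xU show ?thesis by blast
    qed
  next
    case False
    hence no12: "\<And>A. A \<in> F \<Longrightarrow> card A \<noteq> 1 \<and> card A \<noteq> 2" by auto
    define Fx where "Fx x = {A\<in>F. x \<in> A}" for x
    define Fn where "Fn x = {A\<in>F. x \<notin> A}" for x
    define Up where "Up x = {B\<in>F. x \<notin> B \<and> insert x B \<notin> F}" for x
    define Dn where "Dn x = {A\<in>F. x \<in> A \<and> A - {x} \<notin> F}" for x
    have finFs: "finite (Fx x)" "finite (Fn x)" "finite (Up x)" "finite (Dn x)" for x
      using assms(1) by (auto simp: Fx_def Fn_def Up_def Dn_def)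
    have per: "card (Fn x) + card (Dn x) \<le> card (Fx x) + card (Up x)" for x
    proof -
      have inj: "inj_on (insert x) (Fn x - Up x)" by (auto simp: inj_on_def Fn_def insert_ident)
      have img: "insert x ` (Fn x - Up x) \<subseteq> Fx x - Dn x"
        by (auto simp: Fn_def Up_def Fx_def Dn_def)
      have "card (Fn x - Up x) \<le> card (Fx x - Dn x)"
        using card_inj_on_le[OF inj img] finFs by simp
      moreover have "card (Fn x - Up x) = card (Fn x) - card (Up x)"
        by (rule card_Diff_subset) (use assms(1) in \<open>auto simp: Fn_def Up_def\<close>)
      moreover have "card (Fx x - Dn x) = card (Fx x) - card (Dn x)"
        by (rule card_Diff_subset) (use assms(1) in \<open>auto simp: Fx_def Dn_def\<close>)
      moreover have "card (Up x) \<le> card (Fn x)"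
        by (rule card_mono) (use assms(1) in \<open>auto simp: Fn_def Up_def\<close>)
      moreover have "card (Dn x) \<le> card (Fx x)"
        by (rule card_mono) (use assms(1) in \<open>auto simp: Fx_def Dn_def\<close>)
      ultimately show ?thesis by linarith
    qed
    have tot: "card (Fx x) + card (Fn x) = n" for x
    proof -
      have "F = Fx x \<union> Fn x" "Fx x \<inter> Fn x = {}" by (auto simp: Fx_def Fn_def)
      thus ?thesis using card_Un_disjoint finFs n_def by metis
    qed
    define S1 where "S1 = (\<Sum>x\<in>U. card (Fx x))"
    define S0 where "S0 = (\<Sum>x\<in>U. card (Fn x))"
    define SU where "SU = (\<Sum>x\<in>U. card (Up x))"
    define SD where "SD = (\<Sum>x\<in>U. card (Dn x))"
    have e1: "S0 + SD \<le> S1 + SU"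
    proof -
      have "S0 + SD = (\<Sum>x\<in>U. card (Fn x) + card (Dn x))"
        by (simp add: S0_def SD_def sum.distrib)
      also have "\<dots> \<le> (\<Sum>x\<in>U. card (Fx x) + card (Up x))"
        by (rule sum_mono) (rule per)
      also have "\<dots> = S1 + SU" by (simp add: S1_def SU_def sum.distrib)
      finally show ?thesis .
    qed
    have e2: "S0 + S1 = m * n"
    proof -
      have "S0 + S1 = (\<Sum>x\<in>U. card (Fx x) + card (Fn x))"
        by (simp add: S0_def S1_def sum.distrib)
      also have "\<dots> = m * n" using tot mU by simp
      finally show ?thesis .
    qed
    define E where "E = {C. C \<subseteq> U \<and> C \<notin> F \<and> card C \<noteq> 2 \<and> card C \<noteq> 3}"
    define K2 where "K2 = {C. C \<subseteq> U \<and> card C = 2}"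
    define K3 where "K3 = {C. C \<subseteq> U \<and> card C = 3}"
    define F3 where "F3 = {A\<in>F. card A = 3}"
    have finE: "finite E" using finU by (auto simp: E_def intro: finite_subset[of _ "Pow U"])
    have e3: "SU \<le> card E"
    proof -
      have "SU = card (SIGMA x:U. Up x)" using finU finFs by (simp add: SU_def)
      also have "\<dots> \<le> card E"
      proof (rule card_inj_on_le[where f="\<lambda>(x,B). insert x B"])
        show "inj_on (\<lambda>(x,B). insert x B) (SIGMA x:U. Up x)"
        proof (rule inj_onI, clarsimp)
          fix x B x' B'
          assume a: "x \<in> U" "B \<in> Up x" "x' \<in> U" "B' \<in> Up x'" "insert x B = insert x' B'"
          show "x = x' \<and> B = B'"
          proof (cases "x = x'")
            case True
            thus ?thesis using a insert_ident[of x B B'] by (auto simp: Up_def)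
          next
            case False
            have "insert x B = B \<union> B'" using a False by (auto simp: Up_def)
            then have "insert x B \<in> F" using uc a by (auto simp: Up_def)
            thus ?thesis using a by (simp add: Up_def)
          qed
        qed
        show "(\<lambda>(x,B). insert x B) ` (SIGMA x:U. Up x) \<subseteq> E"
        proof clarsimp
          fix x B assume a: "x \<in> U" "B \<in> Up x"
          have BF: "B \<in> F" "x \<notin> B" "insert x B \<notin> F" using a by (auto simp: Up_def)
          have "finite B" using assms(2) BF by auto
          hence c: "card (insert x B) = Suc (card B)" using BF by simp
          show "insert x B \<in> E" using c no12[OF BF(1)] BF FP[OF BF(1)] a(1)
            by (auto simp: E_def)
        qed
        show "finite E" by (rule finE)
      qed
      finally show ?thesis .
    qed
    have finK: "finite K2" "finite K3" using finU
      by (auto simp: K2_def K3_def intro: finite_subset[of _ "Pow U"])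
    have cK2: "card K2 = m choose 2" unfolding K2_def using n_subsets[OF finU] mU by simp
    have cK3: "card K3 = m choose 3" unfolding K3_def using n_subsets[OF finU] mU by simp
    have cF3: "card (F - F3) + card F3 = n"
    proof -
      have "F3 \<subseteq> F" by (auto simp: F3_def)
      thus ?thesis using card_Diff_subset[of F3 F] card_mono[of F F3] assms(1) n_def
        by (metis finite_subset le_add_diff_inverse2)
    qed
    have e4: "card E + card K2 + card K3 + card (F - F3) \<le> 2 ^ m"
    proof -
      have sub: "E \<union> K2 \<union> K3 \<union> (F - F3) \<subseteq> Pow U" using FP by (auto simp: E_def K2_def K3_def)
      have d1: "E \<inter> K2 = {}" "(E \<union> K2) \<inter> K3 = {}" "(E \<union> K2 \<union> K3) \<inter> (F - F3) = {}"
        using no12 by (auto simp: E_def K2_def K3_def F3_def)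
      have fF: "finite (F - F3)" using assms(1) by simp
      have "card (E \<union> K2 \<union> K3 \<union> (F - F3)) = card E + card K2 + card K3 + card (F - F3)"
        using d1 finE finK fF by (simp add: card_Un_disjoint)
      moreover have "card (E \<union> K2 \<union> K3 \<union> (F - F3)) \<le> 2 ^ m"
        using card_mono[OF _ sub] finU card_Pow[OF finU] mU by simp
      ultimately show ?thesis by simp
    qed
    have e5: "card F3 \<le> SD"
    proof -
      have sub: "F3 \<subseteq> snd ` (SIGMA x:U. Dn x)"
      proof
        fix A assume A: "A \<in> F3"
        then have c3: "card A = 3" and AF: "A \<in> F" by (auto simp: F3_def)
        then obtain x where x: "x \<in> A" by (metis card.empty ex_in_conv zero_neq_numeral)
        have "finite A" using assms(2) AF by auto
        hence "card (A - {x}) = 2" using x c3 by simp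
        hence "A - {x} \<notin> F" using no12 by auto
        hence "(x, A) \<in> (SIGMA x:U. Dn x)" using x AF FP[OF AF] by (auto simp: Dn_def)
        thus "A \<in> snd ` (SIGMA x:U. Dn x)" by force
      qed
      have finS: "finite (SIGMA x:U. Dn x)" using finU finFs by simp
      have "card F3 \<le> card (snd ` (SIGMA x:U. Dn x))"
        using card_mono[OF _ sub] finS by simp
      also have "\<dots> \<le> card (SIGMA x:U. Dn x)" by (rule card_image_le[OF finS])
      also have "\<dots> = SD" using finU finFs by (simp add: SD_def)
      finally show ?thesis .
    qed
    have key: "m * n + n + (m choose 2) + (m choose 3) \<le> 2 * S1 + 2 ^ m"
      using e1 e2 e3 e4 e5 cK2 cK3 cF3 by linarith
    have ar: "13*2^m + 12*m*n \<le> 13*(m*n + n + (m choose 2) + (m choose 3))"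
      using arith13[OF assms(5), of n] assms(6) n_def by simp
    have ar2: "13*2^m + 12*(m*n) \<le> 13*(m*n + n + (m choose 2) + (m choose 3))"
      using ar by (simp add: mult.assoc)
    have k13: "13*(m * n + n + (m choose 2) + (m choose 3)) \<le> 13*(2 * S1 + 2 ^ m)"
      using key by (rule mult_le_mono2)
    have big0: "6 * (m * n) \<le> 13 * S1" using k13 ar2 unfolding distrib_left by linarith
    hence big: "6 * m * n \<le> 13 * S1" by (simp add: mult.assoc)
    show ?thesis
    proof (rule ccontr)
      assume nt: "\<not> ?thesis"
      have lt: "\<And>x. x \<in> U \<Longrightarrow> 13 * card (Fx x) < 6 * n"
      proof -
        fix x assume "x \<in> U"
        with nt have "\<not> real (card (Fx x)) \<ge> 6 / 13 * real n"
          by (auto simp: U_def Fx_def n_def)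
        hence "real (card (Fx x)) < 6 / 13 * real n" by linarith
        hence "real (13 * card (Fx x)) < real (6 * n)" by simp
        thus "13 * card (Fx x) < 6 * n" by (simp only: of_nat_less_iff)
      qed
      have Une: "U \<noteq> {}" using mU assms(5) by auto
      have "13 * S1 = (\<Sum>x\<in>U. 13 * card (Fx x))" by (simp add: S1_def sum_distrib_left)
      also have "\<dots> < (\<Sum>x\<in>U. 6 * n)" by (rule sum_strict_mono[OF finU Une lt])
      also have "\<dots> = 6 * m * n" using mU by simp
      finally show False using big by simp
    qed
  qed
qed

end
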